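(* Let $d, N, K \geq 1$ be integers, let $\mathbf{y}_1, \ldots, \mathbf{y}_N \in \mathbb{R}^d$, and let $\mathbf{Y} \in \mathbb{R}^{d \times N}$ be the matrix with columns $\mathbf{y}_1, \ldots, \mathbf{y}_N$; assume $\mathbf{Y} \neq 0$. Let $\rho_k^{[i]} \geq 0$ ($i \in \{1,\ldots,N\}$, $k \in \{1,\ldots,K\}$) satisfy $\sum_{k=1}^K \rho_k^{[i]} = 1$ for every $i$. For $k \in \{1,\ldots,K\}$ let $\mathbf{A}_k = \sum_{i=1}^N \rho_k^{[i]} \mathbf{y}_i \mathbf{y}_i^\mathrm{T}$. For every $\delta > 0$, set $\tau := \delta / \|\mathbf{Y}\|_\mathrm{F}^2$ and \[ \tilde{\mathbf{A}}_k = \sum_{\substack{i=1 \\ \rho_k^{[i]} \geq \tau}}^N \rho_k^{[i]} \mathbf{y}_i \mathbf{y}_i^\mathrm{T}. \] Then $|\lambda_1(\mathbf{A}_k) - \lambda_1(\tilde{\mathbf{A}}_k)| \leq \delta$.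
   Context: $\lambda_1(\mathbf{M})$ denotes the largest eigenvalue of a symmetric matrix $\mathbf{M}$; $\|\cdot\|_\mathrm{F}$ is the Frobenius norm. *)

theory Defs
  imports "HOL-Analysis.Analysis"
begin

definition outer :: "real ^ 'd \<Rightarrow> real ^ 'd ^ 'd" where
  "outer y = (\<chi> i j. y $ i * y $ j)"

definition eigenvalues :: "real ^ 'd ^ 'd \<Rightarrow> real set" where
  "eigenvalues A = {c. \<exists>v. v \<noteq> 0 \<and> A *v v = c *\<^sub>R v}"

definition lambda1 :: "real ^ 'd ^ 'd \<Rightarrow> real" where
  "lambda1 A = Max (eigenvalues A)"

definition frob_norm :: "nat \<Rightarrow> (nat \<Rightarrow> real ^ 'd) \<Rightarrow> real" where
  "frob_norm N y = sqrt (\<Sum>i=1..N. \<Sum>j\<in>UNIV. (y i $ j)\<^sup>2)"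

end

theory Submission
  imports Defs
begin


definition qf :: "real^'d^'d \<Rightarrow> real^'d \<Rightarrow> real" where
  "qf M x = x \<bullet> (M *v x)"

lemma mv_scale: "(M::real^'d^'d) *v (c *\<^sub>R x) = c *\<^sub>R (M *v (x::real^'d))"
  by (simp add: matrix_vector_mult_def vec_eq_iff sum_distrib_left algebra_simps)

lemma mv_add: "(M::real^'d^'d) *v (x + z) = M *v x + M *v (z::real^'d)"
  by (simp add: matrix_vector_mult_def vec_eq_iff sum.distrib algebra_simps)

lemma alg_helper: "(s::real) \<noteq> 0 \<Longrightarrow> (2 * (a/s) * a + (a/s)^2 * (1 - s)) * s^2 = a^2 * (1 + s)"
  unfolding power2_eq_square by (simp add: field_simps)

lemma sym_lambda1:
  fixes M :: "real^'d^'d"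
  assumes sym: "\<And>x z. x \<bullet> (M *v z) = z \<bullet> (M *v x)"
  shows "\<exists>x. norm x = 1 \<and> qf M x = lambda1 M"
    "\<And>x. norm x = 1 \<Longrightarrow> qf M x \<le> lambda1 M"
proof -
  obtain u :: "real^'d" where u: "norm u = 1" using vector_choose_size[of 1] by auto
  have "compact (sphere (0::real^'d) 1)" by simp
  moreover have "sphere (0::real^'d) 1 \<noteq> {}" using u by auto
  moreover have "continuous_on (sphere (0::real^'d) 1) (qf M)"
    unfolding qf_def
    by (intro continuous_intros linear_continuous_on matrix_vector_mul_bounded_linear)
  ultimately obtain x0 where x0s: "x0 \<in> sphere 0 1" and x0m: "\<And>z. z \<in> sphere 0 1 \<Longrightarrow> qf M z \<le> qf M x0"
    using continuous_attains_sup by metis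
  define m where "m = qf M x0"
  have n0: "norm x0 = 1" using x0s by simp
  have qscale: "qf M (c *\<^sub>R z) = c^2 * qf M z" for c z
    unfolding qf_def mv_scale by (simp add: power2_eq_square)
  have bound: "qf M z \<le> m * (norm z)^2" for z
  proof (cases "z = 0")
    case True then show ?thesis by (simp add: qf_def)
  next
    case False
    hence nz: "norm z > 0" by simp
    have "qf M ((1/norm z) *\<^sub>R z) \<le> m" unfolding m_def using nz by (intro x0m) simp
    hence "(1/norm z)^2 * qf M z \<le> m" by (simp add: qscale)
    then show ?thesis using nz by (simp add: field_simps power2_eq_square)
  qed
  have stat: "w \<bullet> (M *v x0 - m *\<^sub>R x0) = 0" for w
  proof -
    define a where "a = w \<bullet> (M *v x0 - m *\<^sub>R x0)"
    define b where "b = qf M w - m * (norm w)^2"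
    have b0: "b \<le> 0" using bound[of w] by (simp add: b_def)
    have key: "2 * t * a + t^2 * b \<le> 0" for t
    proof -
      have "qf M (x0 + t *\<^sub>R w) \<le> m * (norm (x0 + t *\<^sub>R w))^2" by (rule bound)
      moreover have "qf M (x0 + t *\<^sub>R w) = m + 2 * t * (w \<bullet> (M *v x0)) + t^2 * qf M w"
        unfolding qf_def mv_add mv_scale m_def[unfolded qf_def]
        using sym[of x0 w]
        by (simp add: inner_add_left inner_add_right algebra_simps power2_eq_square)
      moreover have "(norm (x0 + t *\<^sub>R w))^2 = 1 + 2 * t * (w \<bullet> x0) + t^2 * (norm w)^2"
      proof -
        have "(norm (x0 + t *\<^sub>R w))^2 = (x0 + t *\<^sub>R w) \<bullet> (x0 + t *\<^sub>R w)" by (rule power2_norm_eq_inner)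
        also have "\<dots> = x0 \<bullet> x0 + 2 * t * (w \<bullet> x0) + t^2 * (w \<bullet> w)"
          by (simp add: inner_add_left inner_add_right algebra_simps power2_eq_square inner_commute)
        finally show ?thesis using n0 by (simp add: power2_norm_eq_inner[symmetric])
      qed
      ultimately show ?thesis by (simp add: a_def b_def inner_diff_right algebra_simps power2_eq_square)
    qed
    show ?thesis
    proof (rule ccontr)
      assume "\<not> ?thesis"
      hence an: "a \<noteq> 0" by (simp add: a_def)
      define t where "t = a / (1 - b)"
      have pos: "1 - b > 0" using b0 by simp
      have eq: "(2 * t * a + t^2 * b) * (1-b)^2 = a^2 * (2 - b)"
        using alg_helper[of "1-b" a] pos unfolding t_def by simp
      have "a^2 * (2 - b) > 0" using an b0 by simp
      hence "(2 * t * a + t^2 * b) * (1-b)^2 > 0" using eq by simp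
      moreover have "(1-b)^2 > 0" using pos by simp
      ultimately have "2 * t * a + t^2 * b > 0" by (simp add: zero_less_mult_iff)
      thus False using key[of t] by simp
    qed
  qed
  have ev: "M *v x0 = m *\<^sub>R x0"
    using stat[of "M *v x0 - m *\<^sub>R x0"] by simp
  have x0nz: "x0 \<noteq> 0" using n0 by auto
  have mE: "m \<in> eigenvalues M" unfolding eigenvalues_def using ev x0nz by blast
  have le: "c \<le> m" if "c \<in> eigenvalues M" for c
  proof -
    from that obtain v where v: "v \<noteq> 0" "M *v v = c *\<^sub>R v" unfolding eigenvalues_def by (rule CollectE) (elim exE conjE)
    have "qf M v = v \<bullet> (c *\<^sub>R v)" using v(2) by (simp only: qf_def)
    also have "\<dots> = c * (v \<bullet> v)" by (rule inner_scaleR_right)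
    also have "\<dots> = c * (norm v)^2" by (simp only: dot_square_norm)
    finally have "c * (norm v)^2 \<le> m * (norm v)^2" using bound[of v] by linarith
    moreover have "(norm v)^2 > 0" using v(1) by simp
    ultimately show ?thesis by (rule mult_right_le_imp_le)
  qed
  have fin: "finite (eigenvalues M)"
  proof -
    define f where "f c = (SOME v. v \<noteq> 0 \<and> M *v v = c *\<^sub>R v)" for c
    have fP: "f c \<noteq> 0 \<and> M *v f c = c *\<^sub>R f c" if "c \<in> eigenvalues M" for c
    proof -
      have "\<exists>v. v \<noteq> 0 \<and> M *v v = c *\<^sub>R v" using that by (simp add: eigenvalues_def)
      thus ?thesis unfolding f_def by (rule someI_ex)
    qed
    have inj: "inj_on f (eigenvalues M)"
    proof (rule inj_onI)
      fix c c' assume c: "c \<in> eigenvalues M" "c' \<in> eigenvalues M" "f c = f c'"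
      have e1: "M *v f c = c *\<^sub>R f c" using fP[OF c(1)] by (rule conjunct2)
      have e2: "M *v f c = c' *\<^sub>R f c" using fP[OF c(2)] c(3) by simp
      have "c *\<^sub>R f c = c' *\<^sub>R f c" using e1 e2 by (metis)
      moreover have "f c \<noteq> 0" using fP[OF c(1)] by (rule conjunct1)
      ultimately show "c = c'" by simp
    qed
    have orth: "pairwise orthogonal (f ` eigenvalues M)"
      unfolding pairwise_def orthogonal_def
    proof (intro ballI impI)
      fix x y assume xy: "x \<in> f ` eigenvalues M" "y \<in> f ` eigenvalues M" "x \<noteq> y"
      then obtain c c' where c: "c \<in> eigenvalues M" "c' \<in> eigenvalues M" and xc: "x = f c" and yc: "y = f c'"
        by blast
      have ne: "c \<noteq> c'" using xy(3) xc yc by blast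
      have E1: "M *v x = c *\<^sub>R x" using fP[OF c(1)] xc by simp
      have E2: "M *v y = c' *\<^sub>R y" using fP[OF c(2)] yc by simp
      have "x \<bullet> (M *v y) = c' * (x \<bullet> y)" using E2 by simp
      moreover have "y \<bullet> (M *v x) = c * (x \<bullet> y)" using E1 by (simp add: inner_commute)
      moreover have "x \<bullet> (M *v y) = y \<bullet> (M *v x)" by (rule sym)
      ultimately have "c' * (x \<bullet> y) = c * (x \<bullet> y)" by metis
      hence "(c' - c) * (x \<bullet> y) = 0" by (simp add: left_diff_distrib)
      thus "x \<bullet> y = 0" using ne by simp
    qed
    have "0 \<notin> f ` eigenvalues M" using fP by auto
    hence "independent (f ` eigenvalues M)" by (rule pairwise_orthogonal_independent[OF orth])
    hence "finite (f ` eigenvalues M)" using independent_bound by blast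
    thus ?thesis using inj by (rule finite_imageD)
  qed
  have lm: "lambda1 M = m" unfolding lambda1_def
    using fin mE le by (intro Max_eqI) auto
  show "\<exists>x. norm x = 1 \<and> qf M x = lambda1 M" using n0 lm m_def by auto
  show "qf M x \<le> lambda1 M" if "norm x = 1" for x
  proof -
    have "qf M x \<le> m * (norm x)^2" by (rule bound)
    thus ?thesis using that lm by simp
  qed
qed

lemma outer_mv: "outer y *v x = (y \<bullet> x) *\<^sub>R (y::real^'d)"
  by (simp add: vec_eq_iff matrix_vector_mult_def outer_def inner_vec_def sum_distrib_left algebra_simps)

lemma sum_mv:
  fixes c :: "nat \<Rightarrow> real" and y :: "nat \<Rightarrow> real^'d"
  assumes "finite I"
  shows "(\<Sum>i\<in>I. c i *\<^sub>R outer (y i)) *v x = (\<Sum>i\<in>I. (c i * (y i \<bullet> x)) *\<^sub>R y i)"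
  using assms
proof (induction I rule: finite_induct)
  case empty then show ?case by simp
next
  case (insert a F)
  have "(\<Sum>i\<in>insert a F. c i *\<^sub>R outer (y i)) *v x
      = (c a *\<^sub>R outer (y a)) *v x + (\<Sum>i\<in>F. c i *\<^sub>R outer (y i)) *v x"
    using insert by (simp add: matrix_vector_mult_add_rdistrib)
  also have "(c a *\<^sub>R outer (y a)) *v x = (c a * (y a \<bullet> x)) *\<^sub>R y a"
    by (simp add: scaleR_matrix_vector_assoc[symmetric] outer_mv)
  finally show ?case using insert by simp
qed

lemma sum_inner:
  fixes c :: "nat \<Rightarrow> real" and y :: "nat \<Rightarrow> real^'d"
  assumes "finite I"
  shows "z \<bullet> ((\<Sum>i\<in>I. c i *\<^sub>R outer (y i)) *v x) = (\<Sum>i\<in>I. c i * (y i \<bullet> x) * (y i \<bullet> z))"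
  unfolding sum_mv[OF assms] by (simp add: inner_sum_right inner_commute)

lemma sum_sym:
  fixes c :: "nat \<Rightarrow> real" and y :: "nat \<Rightarrow> real^'d"
  assumes "finite I"
  shows "z \<bullet> ((\<Sum>i\<in>I. c i *\<^sub>R outer (y i)) *v x) = x \<bullet> ((\<Sum>i\<in>I. c i *\<^sub>R outer (y i)) *v z)"
  unfolding sum_inner[OF assms] by (simp add: algebra_simps)

lemma sum_qf:
  fixes c :: "nat \<Rightarrow> real" and y :: "nat \<Rightarrow> real^'d"
  assumes "finite I"
  shows "qf (\<Sum>i\<in>I. c i *\<^sub>R outer (y i)) x = (\<Sum>i\<in>I. c i * (y i \<bullet> x)^2)"
  unfolding qf_def sum_inner[OF assms] by (simp add: power2_eq_square algebra_simps)

lemma norm_sq_comp: "(norm (v::real^'d))^2 = (\<Sum>j\<in>UNIV. (v $ j)^2)"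
proof -
  have "(norm v)^2 = v \<bullet> v" by (rule power2_norm_eq_inner)
  also have "\<dots> = (\<Sum>j\<in>UNIV. v $ j * v $ j)" by (simp only: inner_vec_def inner_real_def)
  finally show ?thesis by (simp add: power2_eq_square)
qed

theorem lemma1:
  fixes N K :: nat and y :: "nat \<Rightarrow> real ^ 'd" and \<rho> :: "nat \<Rightarrow> nat \<Rightarrow> real"
    and \<delta> :: real and k :: nat
  assumes "N \<ge> 1" and "K \<ge> 1"
    and Ynz: "\<exists>i\<in>{1..N}. y i \<noteq> 0"
    and nonneg: "\<And>i k. i \<in> {1..N} \<Longrightarrow> k \<in> {1..K} \<Longrightarrow> \<rho> k i \<ge> 0"
    and sum1: "\<And>i. i \<in> {1..N} \<Longrightarrow> (\<Sum>k=1..K. \<rho> k i) = 1"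
    and "\<delta> > 0" and "k \<in> {1..K}"
  shows "let \<tau> = \<delta> / (frob_norm N y)\<^sup>2;
             A = (\<Sum>i=1..N. \<rho> k i *\<^sub>R outer (y i));
             At = (\<Sum>i\<in>{i\<in>{1..N}. \<rho> k i \<ge> \<tau>}. \<rho> k i *\<^sub>R outer (y i))
         in \<bar>lambda1 A - lambda1 At\<bar> \<le> \<delta>"
proof -
  define S where "S = {1..N}"
  define F where "F = (\<Sum>i\<in>S. (norm (y i))^2)"
  define \<tau> where "\<tau> = \<delta> / (frob_norm N y)\<^sup>2"
  define T where "T = {i\<in>S. \<rho> k i \<ge> \<tau>}"
  define A where "A = (\<Sum>i\<in>S. \<rho> k i *\<^sub>R outer (y i))"
  define At where "At = (\<Sum>i\<in>T. \<rho> k i *\<^sub>R outer (y i))"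
  have finS: "finite S" and finT: "finite T" and TS: "T \<subseteq> S" by (auto simp: S_def T_def)
  have rnn: "i \<in> S \<Longrightarrow> \<rho> k i \<ge> 0" for i using nonneg assms(7) by (simp add: S_def)
  have frob: "(frob_norm N y)\<^sup>2 = F"
  proof -
    have "(\<Sum>i=1..N. \<Sum>j\<in>UNIV. (y i $ j)\<^sup>2) \<ge> 0" by (intro sum_nonneg) auto
    thus ?thesis unfolding frob_norm_def F_def S_def norm_sq_comp by simp
  qed
  have Fpos: "F > 0"
  proof -
    obtain i0 where i0: "i0 \<in> S" "y i0 \<noteq> 0" using Ynz S_def by auto
    have "(norm (y i0))^2 \<le> F" unfolding F_def using finS i0(1)
      by (intro member_le_sum) auto
    moreover have "(norm (y i0))^2 > 0" using i0(2) by simp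
    ultimately show ?thesis by linarith
  qed
  have tauF: "\<tau> * F = \<delta>" unfolding \<tau>_def frob using Fpos by simp
  have tau0: "\<tau> \<ge> 0" unfolding \<tau>_def frob using Fpos assms(6) by simp
  have symA: "\<And>x z. x \<bullet> (A *v z) = z \<bullet> (A *v x)" unfolding A_def by (rule sum_sym[OF finS])
  have symT: "\<And>x z. x \<bullet> (At *v z) = z \<bullet> (At *v x)" unfolding At_def by (rule sum_sym[OF finT])
  obtain x1 where x1: "norm x1 = 1" "qf A x1 = lambda1 A" using sym_lambda1(1)[OF symA] by blast
  obtain x0 where x0: "norm x0 = 1" "qf At x0 = lambda1 At" using sym_lambda1(1)[OF symT] by blast
  have qA: "qf A x = (\<Sum>i\<in>S. \<rho> k i * (y i \<bullet> x)^2)" for x unfolding A_def by (rule sum_qf[OF finS])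
  have qT: "qf At x = (\<Sum>i\<in>T. \<rho> k i * (y i \<bullet> x)^2)" for x unfolding At_def by (rule sum_qf[OF finT])
  have lo: "lambda1 At \<le> lambda1 A"
  proof -
    have "lambda1 At = (\<Sum>i\<in>T. \<rho> k i * (y i \<bullet> x0)^2)" using x0 qT by simp
    also have "\<dots> \<le> (\<Sum>i\<in>S. \<rho> k i * (y i \<bullet> x0)^2)"
      using finS TS rnn by (intro sum_mono2) auto
    also have "\<dots> = qf A x0" using qA by simp
    also have "\<dots> \<le> lambda1 A" using sym_lambda1(2)[OF symA x0(1)] .
    finally show ?thesis .
  qed
  have hi: "lambda1 A \<le> lambda1 At + \<delta>"
  proof -
    have split: "(\<Sum>i\<in>S. \<rho> k i * (y i \<bullet> x1)^2) = (\<Sum>i\<in>T. \<rho> k i * (y i \<bullet> x1)^2) + (\<Sum>i\<in>S-T. \<rho> k i * (y i \<bullet> x1)^2)"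
      using finS TS by (metis (no_types, lifting) add.commute sum.subset_diff)
    have small: "(\<Sum>i\<in>S-T. \<rho> k i * (y i \<bullet> x1)^2) \<le> (\<Sum>i\<in>S-T. \<tau> * (norm (y i))^2)"
    proof (rule sum_mono)
      fix i assume i: "i \<in> S - T"
      hence r0: "\<rho> k i \<ge> 0" and rt: "\<rho> k i \<le> \<tau>" using rnn by (auto simp: T_def)
      have "\<bar>y i \<bullet> x1\<bar> \<le> norm (y i)" using Cauchy_Schwarz_ineq2[of "y i" x1] x1(1) by simp
      hence "(y i \<bullet> x1)^2 \<le> (norm (y i))^2"
        by (metis abs_le_square_iff abs_norm_cancel)
      moreover have "(y i \<bullet> x1)^2 \<ge> 0" by simp
      ultimately show "\<rho> k i * (y i \<bullet> x1)^2 \<le> \<tau> * (norm (y i))^2"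
        using r0 rt by (intro mult_mono) auto
    qed
    have "(\<Sum>i\<in>S-T. \<tau> * (norm (y i))^2) \<le> (\<Sum>i\<in>S. \<tau> * (norm (y i))^2)"
      using finS tau0 by (intro sum_mono2) auto
    also have "\<dots> = \<tau> * F" unfolding F_def by (simp add: sum_distrib_left)
    finally have "(\<Sum>i\<in>S-T. \<rho> k i * (y i \<bullet> x1)^2) \<le> \<delta>" using small tauF by linarith
    moreover have "(\<Sum>i\<in>T. \<rho> k i * (y i \<bullet> x1)^2) \<le> lambda1 At"
      using sym_lambda1(2)[OF symT x1(1)] qT by simp
    moreover have "lambda1 A = (\<Sum>i\<in>S. \<rho> k i * (y i \<bullet> x1)^2)" using x1 qA by simp
    ultimately show ?thesis using split by linarith
  qed
  have "\<bar>lambda1 A - lambda1 At\<bar> \<le> \<delta>" using lo hi by linarith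
  thus ?thesis unfolding Let_def A_def At_def T_def \<tau>_def S_def .
qed

end
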